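(* Let $(A,B,R)$ be a normalized formal context and $(X,Y)\in\mathcal{C}_N$ with $X\neq\varnothing$ and $X\neq B$. If $X^{\uparrow}\neq\varnothing$, then $\langle X,X^{\uparrow}\rangle$ is a coatom of the concept lattice $\mathcal{C}(A,B,R)$, i.e. there is no formal concept $\langle X_0,Y_0\rangle$ with $X\subsetneq X_0\subsetneq B$.
   Context: A formal context is a triple $(A,B,R)$ with $R\subseteq A\times B$. Derivation operators: $X^{\uparrow}=\{a\in A\mid (a,b)\in R \text{ for all } b\in X\}$ for $X\subseteq B$ and $Y^{\downarrow}=\{b\in B\mid (a,b)\in R \text{ for all } a\in Y\}$ for $Y\subseteq A$; a formal concept is a pair $\langle X,Y\rangle$ with $X^\uparrow=Y$, $Y^\downarrow=X$, and $\mathcal{C}(A,B,R)$ is the set of formal concepts ordered by inclusion of extents, whose top element is $\langle B,\varnothing\rangle$ for a normalized context. A coatom is an element covered by the top element. Necessity operators: $X^{\uparrow_N}=\{a\in A\mid \text{for all } b\in B,\ (a,b)\in R\Rightarrow b\in X\}$ and $Y^{\downarrow^N}=\{b\in B\mid \text{for all } a\in A,\ (a,b)\in R\Rightarrow a\in Y\}$. $\mathcal{C}_N=\{(X,Y)\mid X\subseteq B,\ Y\subseteq A,\ X^{\uparrow_N}=Y,\ Y^{\downarrow^N}=X\}$. The context is normalized if for every $a\in A$ there are $b,b'\in B$ with $(a,b)\in R$, $(a,b')\notin R$, and for every $b\in B$ there are $a,a'\in A$ with $(a,b)\in R$, $(a',b)\notin R$. *)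

theory Defs
  imports Main
begin

text \<open>Formal context (A,B,R) with R a subset of A x B. Extents are subsets of B.\<close>

definition up :: "'a set \<Rightarrow> 'b set \<Rightarrow> ('a \<times> 'b) set \<Rightarrow> 'b set \<Rightarrow> 'a set" where
  "up A B R X = {a \<in> A. \<forall>b\<in>X. (a, b) \<in> R}"

definition down :: "'a set \<Rightarrow> 'b set \<Rightarrow> ('a \<times> 'b) set \<Rightarrow> 'a set \<Rightarrow> 'b set" where
  "down A B R Y = {b \<in> B. \<forall>a\<in>Y. (a, b) \<in> R}"

definition upN :: "'a set \<Rightarrow> 'b set \<Rightarrow> ('a \<times> 'b) set \<Rightarrow> 'b set \<Rightarrow> 'a set" where
  "upN A B R X = {a \<in> A. \<forall>b\<in>B. (a, b) \<in> R \<longrightarrow> b \<in> X}"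

definition downN :: "'a set \<Rightarrow> 'b set \<Rightarrow> ('a \<times> 'b) set \<Rightarrow> 'a set \<Rightarrow> 'b set" where
  "downN A B R Y = {b \<in> B. \<forall>a\<in>A. (a, b) \<in> R \<longrightarrow> a \<in> Y}"

definition formal_concept :: "'a set \<Rightarrow> 'b set \<Rightarrow> ('a \<times> 'b) set \<Rightarrow> 'b set \<Rightarrow> 'a set \<Rightarrow> bool" where
  "formal_concept A B R X Y \<longleftrightarrow> X \<subseteq> B \<and> Y \<subseteq> A \<and> up A B R X = Y \<and> down A B R Y = X"

definition CN :: "'a set \<Rightarrow> 'b set \<Rightarrow> ('a \<times> 'b) set \<Rightarrow> ('b set \<times> 'a set) set" where
  "CN A B R = {(X, Y). X \<subseteq> B \<and> Y \<subseteq> A \<and> upN A B R X = Y \<and> downN A B R Y = X}"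

definition normalized :: "'a set \<Rightarrow> 'b set \<Rightarrow> ('a \<times> 'b) set \<Rightarrow> bool" where
  "normalized A B R \<longleftrightarrow> R \<subseteq> A \<times> B \<and>
     (\<forall>a\<in>A. \<exists>b\<in>B. \<exists>b'\<in>B. (a, b) \<in> R \<and> (a, b') \<notin> R) \<and>
     (\<forall>b\<in>B. \<exists>a\<in>A. \<exists>a'\<in>A. (a, b) \<in> R \<and> (a', b) \<notin> R)"

text \<open>Concepts ordered by inclusion of extents; for a normalized context the top is (B, {}).
  A coatom is a concept covered by the top element.\<close>

definition coatom :: "'a set \<Rightarrow> 'b set \<Rightarrow> ('a \<times> 'b) set \<Rightarrow> 'b set \<Rightarrow> 'a set \<Rightarrow> bool" where
  "coatom A B R X Y \<longleftrightarrow> formal_concept A B R X Y \<and> X \<subset> B \<and>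
     \<not> (\<exists>X0 Y0. formal_concept A B R X0 Y0 \<and> X \<subset> X0 \<and> X0 \<subset> B)"

end

theory Submission
  imports Defs
begin

theorem mainTheorem6:
  fixes A :: "'a set" and B :: "'b set" and R :: "('a \<times> 'b) set"
  assumes "normalized A B R"
    and "(X, Y) \<in> CN A B R"
    and "X \<noteq> {}" and "X \<noteq> B"
    and "up A B R X \<noteq> {}"
  shows "coatom A B R X (up A B R X)"
proof -
  have RAB: "R \<subseteq> A \<times> B" using assms(1) unfolding normalized_def by blast
  have XB: "X \<subseteq> B" and Yd: "Y = upN A B R X" and Xd: "X = downN A B R Y"
    using assms(2) unfolding CN_def by auto
  obtain b1 where b1: "b1 \<in> X" using assms(3) by blast
  have key: "\<And>a b. a \<in> up A B R X \<Longrightarrow> (a, b) \<in> R \<Longrightarrow> b \<in> X"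
  proof -
    fix a b assume a: "a \<in> up A B R X" and ab: "(a, b) \<in> R"
    have "(a, b1) \<in> R" using a b1 unfolding up_def by blast
    hence "a \<in> Y" using b1 Xd a unfolding downN_def up_def by blast
    thus "b \<in> X" using Yd ab RAB unfolding upN_def by blast
  qed
  have upsub: "up A B R X \<subseteq> A" unfolding up_def by blast
  obtain a0 where a0: "a0 \<in> up A B R X" using assms(5) by blast
  have dX: "down A B R (up A B R X) = X"
  proof
    show "down A B R (up A B R X) \<subseteq> X" using a0 key unfolding down_def by blast
    show "X \<subseteq> down A B R (up A B R X)" using XB unfolding down_def up_def by blast
  qed
  have fc: "formal_concept A B R X (up A B R X)"
    unfolding formal_concept_def using XB upsub dX by blast
  have nb: "\<not> (\<exists>X0 Y0. formal_concept A B R X0 Y0 \<and> X \<subset> X0 \<and> X0 \<subset> B)"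
  proof
    assume "\<exists>X0 Y0. formal_concept A B R X0 Y0 \<and> X \<subset> X0 \<and> X0 \<subset> B"
    then obtain X0 Y0 where f: "formal_concept A B R X0 Y0" and s: "X \<subset> X0" and t: "X0 \<subset> B"
      by blast
    have Y0: "Y0 = up A B R X0" and X0: "X0 = down A B R Y0"
      using f unfolding formal_concept_def by auto
    obtain c where c: "c \<in> X0" "c \<notin> X" using s by blast
    have "Y0 = {}"
    proof (rule ccontr)
      assume "Y0 \<noteq> {}"
      then obtain a where a: "a \<in> Y0" by blast
      hence "a \<in> up A B R X" using Y0 s unfolding up_def by blast
      moreover have "(a, c) \<in> R" using a c Y0 unfolding up_def by blast
      ultimately show False using key c by blast
    qed
    hence "X0 = B" using X0 unfolding down_def by blast
    thus False using t by blast
  qed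
  show ?thesis unfolding coatom_def using fc nb XB assms(4) by blast
qed

end
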